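(* Let $X$ be a real Hilbert space, let $A$ be a closed linear subspace of $X$, let $C$ be a nonempty closed convex subset of $A$, and let $(x_n)_{n\in\mathbb{N}}$ be a sequence in $X$. Suppose that $(x_n)_{n\in\mathbb{N}}$ is Fejér monotone with respect to $C$, i.e., for all $n\in\mathbb{N}$ and all $c\in C$, $\|x_{n+1}-c\|\le\|x_n-c\|$, and suppose that every weak cluster point of $(P_A x_n)_{n\in\mathbb{N}}$ lies in $C$. Then $(P_A x_n)_{n\in\mathbb{N}}$ converges weakly to some point in $C$.
   Context: $P_A$ denotes the orthogonal (metric) projection onto the closed convex set $A$. *)

theory Defs
  imports "HOL-Analysis.Analysis"
begin

text \<open>Metric (orthogonal) projection onto a set of a real inner product space;
  same definition as the library's closest_point, but without the heine_borel
  (finite-dimensionality) restriction.\<close>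
definition metric_proj :: "'a::real_inner set \<Rightarrow> 'a \<Rightarrow> 'a" where
  "metric_proj S a = (SOME p. p \<in> S \<and> (\<forall>y\<in>S. dist a p \<le> dist a y))"

definition weakly_converges :: "(nat \<Rightarrow> 'a::real_inner) \<Rightarrow> 'a \<Rightarrow> bool" where
  "weakly_converges x l \<longleftrightarrow> (\<forall>y. ((\<lambda>n. x n \<bullet> y) \<longlongrightarrow> l \<bullet> y) sequentially)"

definition weak_cluster_point :: "(nat \<Rightarrow> 'a::real_inner) \<Rightarrow> 'a \<Rightarrow> bool" where
  "weak_cluster_point x l \<longleftrightarrow> (\<exists>r. strict_mono r \<and> weakly_converges (x \<circ> r) l)"

end

theory Submission
  imports Defs "HOL-Library.Diagonal_Subsequence"
begin

lemma parallelogram: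
  fixes x y :: "'a::real_inner"
  shows "norm (x + y)^2 + norm (x - y)^2 = 2 * norm x ^2 + 2 * norm y^2"
  by (simp add: power2_norm_eq_inner algebra_simps inner_add inner_diff inner_commute)

lemma proj_exists:
  fixes S :: "'a::{real_inner, complete_space} set"
  assumes "closed S" "convex S" "S \<noteq> {}"
  shows "\<exists>p\<in>S. \<forall>y\<in>S. dist a p \<le> dist a y"
proof -
  define d where "d = infdist a S"
  have dle: "d \<le> dist a y" if "y \<in> S" for y using infdist_le[OF that] d_def by simp
  have d0: "0 \<le> d" using infdist_nonneg d_def by simp
  have "\<exists>s\<in>S. dist a s < d + inverse (real (Suc n))" for n
  proof (rule ccontr)
    assume "\<not> ?thesis"
    hence "\<forall>s\<in>S. d + inverse (real (Suc n)) \<le> dist a s" by force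
    hence "d + inverse (real (Suc n)) \<le> d"
      unfolding d_def infdist_notempty[OF assms(3)]
      by (metis assms(3) cINF_greatest d_def infdist_notempty)
    thus False by simp
  qed
  then obtain s where sS: "\<And>n. s n \<in> S" and sd: "\<And>n. dist a (s n) < d + inverse (real (Suc n))"
    by metis
  define e where "e n = inverse (real (Suc n))" for n
  have e0: "0 < e n" for n by (simp add: e_def)
  have e1: "e n \<le> 1" for n by (simp add: e_def inverse_le_1_iff)
  have sq: "norm (a - s n)^2 \<le> d^2 + (2*d+1) * e n" for n
  proof -
    have "norm (a - s n) \<le> d + e n" using sd[of n] by (simp add: dist_norm e_def)
    hence "norm (a - s n)^2 \<le> (d + e n)^2" by (simp add: power_mono)
    also have "\<dots> = d^2 + 2*d*e n + e n * e n" by (simp add: power2_eq_square algebra_simps)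
    also have "\<dots> \<le> d^2 + (2*d+1) * e n" using e0[of n] e1[of n]
      by (simp add: algebra_simps mult_left_le)
    finally show ?thesis .
  qed
  have mid: "norm (a - (1/2) *\<^sub>R (s n + s m))^2 \<ge> d^2" for n m
  proof -
    have "(1/2) *\<^sub>R (s n + s m) \<in> S"
      using convexD[OF assms(2) sS[of n] sS[of m], of "1/2" "1/2"] by (simp add: scaleR_add_right)
    hence "d \<le> norm (a - (1/2) *\<^sub>R (s n + s m))" using dle by (simp add: dist_norm)
    thus ?thesis using d0 by (simp add: power_mono)
  qed
  have key: "norm (s n - s m)^2 \<le> 2*(2*d+1)*(e n + e m)" for n m
  proof -
    have "norm ((a - s n) + (a - s m))^2 + norm ((a - s n) - (a - s m))^2
          = 2 * norm (a - s n)^2 + 2 * norm (a - s m)^2" by (rule parallelogram)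
    moreover have "(a - s n) + (a - s m) = 2 *\<^sub>R (a - (1/2) *\<^sub>R (s n + s m))"
      by (simp add: algebra_simps scaleR_2)
    moreover have "(a - s n) - (a - s m) = s m - s n" by simp
    ultimately have "4 * norm (a - (1/2) *\<^sub>R (s n + s m))^2 + norm (s n - s m)^2
          = 2 * norm (a - s n)^2 + 2 * norm (a - s m)^2"
      by (simp add: power_mult_distrib norm_minus_commute)
    thus ?thesis using mid[of n m] sq[of n] sq[of m] by (simp add: algebra_simps)
  qed
  have "Cauchy s"
  proof (rule metric_CauchyI)
    fix eps :: real assume "eps > 0"
    obtain N where N: "inverse (real (Suc N)) < eps^2 / (4*(2*d+1))"
      using reals_Archimedean \<open>eps > 0\<close> d0 by (metis divide_pos_pos mult_pos_pos zero_less_numeral zero_less_power add_nonneg_pos zero_less_one mult_nonneg_nonneg zero_le_numeral)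
    show "\<exists>M. \<forall>m\<ge>M. \<forall>n\<ge>M. dist (s m) (s n) < eps"
    proof (intro exI allI impI)
      fix m n assume "N \<le> m" "N \<le> n"
      have "e m \<le> inverse (real (Suc N))" "e n \<le> inverse (real (Suc N))"
        using \<open>N \<le> m\<close> \<open>N \<le> n\<close> by (auto simp: e_def intro!: le_imp_inverse_le)
      hence "2*(2*d+1)*(e m + e n) \<le> 2*(2*d+1)*(2*inverse (real (Suc N)))"
        using d0 by (intro mult_left_mono) auto
      also have "\<dots> < eps^2" using N d0 by (simp add: field_simps)
      finally have "norm (s m - s n)^2 < eps^2" using key[of m n] by linarith
      thus "dist (s m) (s n) < eps" using \<open>eps > 0\<close>
        by (simp add: dist_norm power_less_imp_less_base)
    qed
  qed
  then obtain p where sp: "s \<longlonglongrightarrow> p" using Cauchy_convergent_iff convergent_def by blast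
  have pS: "p \<in> S" using closed_sequentially[OF assms(1) sS sp] .
  have "(\<lambda>n. dist a (s n)) \<longlonglongrightarrow> dist a p" by (intro tendsto_intros sp)
  moreover have "(\<lambda>n. d + e n) \<longlonglongrightarrow> d + 0" unfolding e_def
    by (intro tendsto_intros LIMSEQ_inverse_real_of_nat)
  ultimately have "dist a p \<le> d" using sd by (intro LIMSEQ_le[of _ _ "\<lambda>n. d + e n"]) (auto simp: e_def less_imp_le)
  thus ?thesis using pS dle by force
qed

lemma proj_orth:
  fixes S :: "'a::real_inner set"
  assumes "subspace S" "p \<in> S" "\<forall>y\<in>S. dist a p \<le> dist a y" "s \<in> S"
  shows "(a - p) \<bullet> s = 0"
proof (rule ccontr)
  define k where "k = (a - p) \<bullet> s"
  define N where "N = s \<bullet> s"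
  assume "(a - p) \<bullet> s \<noteq> 0"
  hence k0: "k \<noteq> 0" by (simp add: k_def)
  have N0: "N \<ge> 0" by (simp add: N_def)
  define t where "t = k / (N + 1)"
  have "p + t *\<^sub>R s \<in> S" using assms(1,2,4) by (simp add: subspace_add subspace_scale)
  hence "dist a p \<le> dist a (p + t *\<^sub>R s)" using assms(3) by blast
  hence "norm (a - p)^2 \<le> norm ((a - p) - t *\<^sub>R s)^2"
    by (simp add: dist_norm power_mono diff_diff_eq)
  hence "(a-p)\<bullet>(a-p) \<le> (a-p)\<bullet>(a-p) - 2 * t * k + t*t*N"
    by (simp add: power2_norm_eq_inner inner_diff inner_commute k_def N_def algebra_simps)
  hence "2 * t * k \<le> t * t * N" by simp
  hence h: "2*t*k*((N+1)*(N+1)) \<le> t*t*N*((N+1)*(N+1))"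
    by (rule mult_right_mono) (use N0 in auto)
  have tN: "t * (N+1) = k" using N0 by (simp add: t_def field_simps)
  have "2*(t*(N+1))*k*(N+1) \<le> (t*(N+1))*(t*(N+1))*N" using h by (simp add: algebra_simps)
  hence "2*k*k*(N+1) \<le> k*k*N" unfolding tN .
  moreover have kk: "k * k > 0" using k0 not_real_square_gt_zero by blast
  ultimately have "k*k*(2*(N+1)) \<le> k*k*N" by (simp add: algebra_simps)
  hence "2*(N+1) \<le> N" using kk by (simp add: mult_le_cancel_left_pos)
  thus False using N0 by simp
qed

lemma metric_proj_char:
  fixes S :: "'a::{real_inner, complete_space} set"
  assumes "subspace S" "closed S"
  shows "metric_proj S a \<in> S" "\<And>s. s \<in> S \<Longrightarrow> (a - metric_proj S a) \<bullet> s = 0"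
proof -
  have ex: "\<exists>p. p \<in> S \<and> (\<forall>y\<in>S. dist a p \<le> dist a y)"
    using proj_exists[OF assms(2) subspace_imp_convex[OF assms(1)]] assms(1)
    by (metis empty_iff subspace_0)
  have "metric_proj S a \<in> S \<and> (\<forall>y\<in>S. dist a (metric_proj S a) \<le> dist a y)"
    unfolding metric_proj_def by (rule someI_ex[OF ex])
  thus "metric_proj S a \<in> S" "\<And>s. s \<in> S \<Longrightarrow> (a - metric_proj S a) \<bullet> s = 0"
    using proj_orth[OF assms(1)] by auto
qed

lemma subspace_closure':
  fixes S :: "'a::real_normed_vector set"
  assumes "subspace S"
  shows "subspace (closure S)"
  unfolding subspace_def
proof (intro conjI ballI allI)
  show "0 \<in> closure S" using assms subspace_0 closure_subset by blast
next
  fix x y assume "x \<in> closure S" "y \<in> closure S"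
  then obtain f g where f: "\<And>n. f n \<in> S" "f \<longlonglongrightarrow> x" and g: "\<And>n. g n \<in> S" "g \<longlonglongrightarrow> y"
    unfolding closure_sequential by metis
  have "(\<lambda>n. f n + g n) \<longlonglongrightarrow> x + y" by (intro tendsto_intros f g)
  moreover have "\<And>n. f n + g n \<in> S" using f g assms subspace_add by blast
  ultimately show "x + y \<in> closure S" unfolding closure_sequential
    by (auto intro!: exI[where x="\<lambda>n. f n + g n"])
next
  fix c :: real and x assume "x \<in> closure S"
  then obtain f where f: "\<And>n. f n \<in> S" "f \<longlonglongrightarrow> x"
    unfolding closure_sequential by metis
  have "(\<lambda>n. c *\<^sub>R f n) \<longlonglongrightarrow> c *\<^sub>R x" by (intro tendsto_intros f)
  moreover have "\<And>n. c *\<^sub>R f n \<in> S" using f assms subspace_scale by blast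
  ultimately show "c *\<^sub>R x \<in> closure S" unfolding closure_sequential
    by (auto intro!: exI[where x="\<lambda>n. c *\<^sub>R f n"])
qed

lemma riesz:
  fixes f :: "'a::{real_inner, complete_space} \<Rightarrow> real"
  assumes add: "\<And>x y. f (x + y) = f x + f y"
    and sc: "\<And>r x. f (r *\<^sub>R x) = r * f x"
    and bd: "\<And>x. \<bar>f x\<bar> \<le> norm x * K"
  shows "\<exists>p. \<forall>y. f y = y \<bullet> p"
proof (cases "\<forall>y. f y = 0")
  case True thus ?thesis by (intro exI[of _ 0]) simp
next
  case False
  then obtain z where fz: "f z \<noteq> 0" by blast
  have bl: "bounded_linear f" using bd by (intro bounded_linear_intro[of f K]) (auto simp: add sc)
  define N where "N = {y. f y = 0}"
  have f0: "f 0 = 0" using sc[of 0 0] by simp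
  have "closed {x \<in> UNIV. f x = 0}"
    by (rule continuous_closed_preimage_constant) (auto intro: linear_continuous_on bl)
  hence cN: "closed N" unfolding N_def by simp
  have sN: "subspace N" unfolding N_def subspace_def using f0 add sc by auto
  define q where "q = metric_proj N z"
  have qN: "q \<in> N" and orth: "\<And>s. s \<in> N \<Longrightarrow> (z - q) \<bullet> s = 0"
    using metric_proj_char[OF sN cN] q_def by auto
  define w where "w = z - q"
  have fq: "f q = 0" using qN N_def by simp
  have fw: "f w = f z" unfolding w_def using add[of "z - q" q] fq by simp
  have ww: "w \<bullet> w \<noteq> 0"
  proof
    assume "w \<bullet> w = 0" hence "w = 0" by simp
    hence "f w = 0" using f0 by simp
    thus False using fw fz by simp
  qed
  show ?thesis
  proof (intro exI[of _ "(f w / (w \<bullet> w)) *\<^sub>R w"] allI)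
    fix y
    have "f (y - (f y / f w) *\<^sub>R w) = 0"
      using add[of "y - (f y / f w) *\<^sub>R w" "(f y / f w) *\<^sub>R w"] sc[of "f y / f w" w] fw fz
      by simp
    hence "(y - (f y / f w) *\<^sub>R w) \<bullet> w = 0"
      using orth[of "y - (f y / f w) *\<^sub>R w"] N_def w_def by (simp add: inner_commute)
    hence "y \<bullet> w = (f y / f w) * (w \<bullet> w)" by (simp add: inner_diff_left)
    thus "f y = y \<bullet> ((f w / (w \<bullet> w)) *\<^sub>R w)" using ww fw fz by (simp add: field_simps)
  qed
qed

lemma diag_conv:
  fixes u :: "nat \<Rightarrow> 'a::real_inner"
  assumes B: "\<And>n. norm (u n) \<le> B"
  shows "\<exists>r. strict_mono r \<and> (\<forall>k. convergent (\<lambda>i. u (r i) \<bullet> u k))"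
proof -
  interpret subseqs "\<lambda>k s. convergent (\<lambda>i. u (s i) \<bullet> u k)"
  proof
    fix k and s :: "nat \<Rightarrow> nat" assume "strict_mono s"
    obtain f where f: "strict_mono f" "monoseq (\<lambda>n. u (s (f n)) \<bullet> u k)"
      using seq_monosub[of "\<lambda>n. u (s n) \<bullet> u k"] by blast
    have "Bseq (\<lambda>n. u (s (f n)) \<bullet> u k)"
    proof (rule BseqI')
      fix n
      have "\<bar>u (s (f n)) \<bullet> u k\<bar> \<le> norm (u (s (f n))) * norm (u k)" by (rule Cauchy_Schwarz_ineq2)
      also have "\<dots> \<le> B * B" using B by (intro mult_mono) (auto intro: order_trans[OF norm_ge_zero])
      finally show "norm (u (s (f n)) \<bullet> u k) \<le> B * B" by simp
    qed
    hence "convergent (\<lambda>n. u (s (f n)) \<bullet> u k)" using f(2) Bseq_monoseq_convergent by blast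
    thus "\<exists>r'. strict_mono r' \<and> convergent (\<lambda>i. u ((s \<circ> r') i) \<bullet> u k)"
      using f(1) by (intro exI[of _ f]) simp
  qed
  have "convergent (\<lambda>i. u (diagseq i) \<bullet> u k)" for k
  proof -
    have "convergent (\<lambda>i. u ((diagseq \<circ> (+) (Suc k)) i) \<bullet> u k)"
      by (rule diagseq_holds) (auto dest: convergent_subseq_convergent simp: o_def)
    hence "convergent (\<lambda>i. u (diagseq (i + Suc k)) \<bullet> u k)" by (simp add: o_def add.commute)
    thus ?thesis using convergent_ignore_initial_segment[of "\<lambda>i. u (diagseq i) \<bullet> u k" "Suc k"] by simp
  qed
  thus ?thesis using subseq_diagseq by blast
qed

lemma conv_lin: "convergent (X::nat\<Rightarrow>real) \<Longrightarrow> convergent Y \<Longrightarrow> convergent (\<lambda>i. c * X i + Y i)"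
proof -
  assume "convergent X" "convergent Y"
  then obtain a b where "X \<longlonglongrightarrow> a" "Y \<longlonglongrightarrow> b" unfolding convergent_def by blast
  hence "(\<lambda>i. c * X i + Y i) \<longlonglongrightarrow> c * a + b" by (intro tendsto_intros)
  thus ?thesis unfolding convergent_def by blast
qed

lemma weak_compact:
  fixes u :: "nat \<Rightarrow> 'a::{real_inner, complete_space}"
  assumes B: "\<And>n. norm (u n) \<le> B"
  shows "\<exists>r p. strict_mono r \<and> weakly_converges (u \<circ> r) p"
proof -
  obtain r where r: "strict_mono r" "\<And>k. convergent (\<lambda>i. u (r i) \<bullet> u k)"
    using diag_conv[of u B] B by blast
  define v where "v = u \<circ> r"
  have vB: "norm (v i) \<le> B" for i using B by (simp add: v_def)
  have B0: "0 \<le> B" using B[of 0] norm_ge_zero order_trans by blast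
  define S where "S = span (range u)"
  have cS: "convergent (\<lambda>i. v i \<bullet> y)" if "y \<in> S" for y
    using that unfolding S_def
  proof (induction rule: span_induct_alt)
    case base thus ?case by (simp add: convergent_const)
  next
    case (step c x y)
    then obtain k where "x = u k" by blast
    hence "convergent (\<lambda>i. v i \<bullet> x)" using r(2) by (simp add: v_def)
    from conv_lin[OF this step(2), of c] show ?case by (simp add: inner_add_right)
  qed
  have cM: "convergent (\<lambda>i. v i \<bullet> y)" if yc: "y \<in> closure S" for y
    unfolding Cauchy_convergent_iff[symmetric]
  proof (rule metric_CauchyI)
    fix e :: real assume e: "e > 0"
    obtain z where z: "z \<in> S" "dist y z < e / (4 * (B + 1))"
      using closure_approachableD[OF yc, of "e / (4 * (B + 1))"] e B0 by auto
    have "Cauchy (\<lambda>i. v i \<bullet> z)" using cS[OF z(1)] Cauchy_convergent_iff by blast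
    then obtain M where M: "\<And>m n. M \<le> m \<Longrightarrow> M \<le> n \<Longrightarrow> dist (v m \<bullet> z) (v n \<bullet> z) < e/2"
      using metric_CauchyD[of _ "e/2"] e by (meson half_gt_zero)
    have small: "\<bar>v i \<bullet> (y - z)\<bar> < e/4" for i
    proof -
      have "\<bar>v i \<bullet> (y - z)\<bar> \<le> norm (v i) * norm (y - z)" by (rule Cauchy_Schwarz_ineq2)
      also have "\<dots> \<le> B * norm (y - z)" using vB by (intro mult_right_mono) auto
      also have "\<dots> \<le> B * (e / (4 * (B + 1)))" using z(2) B0 by (intro mult_left_mono) (auto simp: dist_norm)
      also have "\<dots> < e/4" using B0 e by (simp add: field_simps)
      finally show ?thesis .
    qed
    show "\<exists>M. \<forall>m\<ge>M. \<forall>n\<ge>M. dist (v m \<bullet> y) (v n \<bullet> y) < e"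
    proof (intro exI allI impI)
      fix m n assume "M \<le> m" "M \<le> n"
      have eq: "v m \<bullet> y - v n \<bullet> y = (v m \<bullet> z - v n \<bullet> z) + v m \<bullet> (y - z) - v n \<bullet> (y - z)"
        by (simp add: inner_diff_right)
      show "dist (v m \<bullet> y) (v n \<bullet> y) < e"
        using M[OF \<open>M \<le> m\<close> \<open>M \<le> n\<close>] small[of m] small[of n] unfolding dist_real_def eq
        by linarith
    qed
  qed
  define Mc where "Mc = closure S"
  have sM: "subspace Mc" unfolding Mc_def S_def by (intro subspace_closure' subspace_span)
  have clM: "closed Mc" unfolding Mc_def by simp
  have vM: "v i \<in> Mc" for i unfolding Mc_def S_def v_def
    using closure_subset span_base by (metis (no_types, lifting) comp_apply range_eqI subsetD)
  have call: "convergent (\<lambda>i. v i \<bullet> y)" for y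
  proof -
    define q where "q = metric_proj Mc y"
    have qM: "q \<in> Mc" and orth: "\<And>s. s \<in> Mc \<Longrightarrow> (y - q) \<bullet> s = 0"
      using metric_proj_char[OF sM clM] q_def by auto
    have "v i \<bullet> y = v i \<bullet> q" for i
      using orth[OF vM[of i]] by (simp add: inner_diff_left inner_diff_right inner_commute)
    thus ?thesis using cM qM Mc_def by simp
  qed
  define f where "f y = lim (\<lambda>i. v i \<bullet> y)" for y
  have ft: "(\<lambda>i. v i \<bullet> y) \<longlonglongrightarrow> f y" for y
    using call[of y] convergent_LIMSEQ_iff f_def by metis
  have fadd: "f (x + y) = f x + f y" for x y
  proof -
    have "(\<lambda>i. v i \<bullet> (x + y)) \<longlonglongrightarrow> f x + f y"
      unfolding inner_add_right by (intro tendsto_add ft)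
    thus ?thesis using ft LIMSEQ_unique by blast
  qed
  have fsc: "f (c *\<^sub>R x) = c * f x" for c x
  proof -
    have "(\<lambda>i. v i \<bullet> (c *\<^sub>R x)) \<longlonglongrightarrow> c * f x"
      unfolding inner_scaleR_right by (intro tendsto_mult_left ft)
    thus ?thesis using ft LIMSEQ_unique by blast
  qed
  have fbd: "\<bar>f y\<bar> \<le> norm y * B" for y
  proof -
    have "(\<lambda>i. \<bar>v i \<bullet> y\<bar>) \<longlonglongrightarrow> \<bar>f y\<bar>" by (intro tendsto_rabs ft)
    moreover have "\<forall>n\<ge>0. \<bar>v n \<bullet> y\<bar> \<le> norm y * B"
    proof (intro allI impI)
      fix n :: nat
      have "\<bar>v n \<bullet> y\<bar> \<le> norm (v n) * norm y" by (rule Cauchy_Schwarz_ineq2)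
      also have "\<dots> \<le> B * norm y" using vB by (intro mult_right_mono) auto
      finally show "\<bar>v n \<bullet> y\<bar> \<le> norm y * B" by (simp add: mult.commute)
    qed
    ultimately show ?thesis by (rule Lim_bounded)
  qed
  obtain p where p: "\<And>y. f y = y \<bullet> p" using riesz[of f, OF fadd fsc fbd] by blast
  have "weakly_converges v p"
    unfolding weakly_converges_def using ft p by (simp add: inner_commute)
  thus ?thesis using r(1) v_def by blast
qed

lemma norm_add_sq: "norm (u + v)^2 = norm u^2 + norm v^2 + 2 * (u \<bullet> (v::'a::real_inner))"
  by (simp add: power2_norm_eq_inner inner_add_left inner_add_right inner_commute)

lemma sq_ident: "(norm (x - c2)^2 - norm (x - c1)^2 - c2 \<bullet> c2 + c1 \<bullet> c1) / 2 = x \<bullet> (c1 - (c2::'a::real_inner))"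
  by (simp add: power2_norm_eq_inner inner_diff_left inner_diff_right inner_commute)

theorem lemma2p1:
  fixes A C :: "'a::{real_inner, complete_space} set" and x :: "nat \<Rightarrow> 'a"
  assumes "subspace A" and "closed A"
    and "C \<noteq> {}" and "closed C" and "convex C" and "C \<subseteq> A"
    and "\<And>n c. c \<in> C \<Longrightarrow> norm (x (Suc n) - c) \<le> norm (x n - c)"
    and "\<And>p. weak_cluster_point (\<lambda>n. metric_proj A (x n)) p \<Longrightarrow> p \<in> C"
  shows "\<exists>p\<in>C. weakly_converges (\<lambda>n. metric_proj A (x n)) p"
proof -
  define Px where "Px = (\<lambda>n. metric_proj A (x n))"
  have PA: "Px n \<in> A" for n using metric_proj_char(1)[OF assms(1,2)] Px_def by simp
  have orth: "s \<in> A \<Longrightarrow> (x n - Px n) \<bullet> s = 0" for n s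
    using metric_proj_char(2)[OF assms(1,2)] Px_def by simp
  have fej: "norm (x n - c) \<le> norm (x 0 - c)" if "c \<in> C" for n c
  proof (induction n)
    case (Suc n) thus ?case using assms(7)[OF that, of n] by linarith
  qed simp
  obtain c0 where c0: "c0 \<in> C" using assms(3) by blast
  have c0A: "c0 \<in> A" using c0 assms(6) by blast
  have pyth: "norm (Px n - c0) \<le> norm (x n - c0)" for n
  proof -
    have o: "(x n - Px n) \<bullet> (Px n - c0) = 0"
      using orth[of "Px n - c0" n] PA[of n] c0A assms(1) by (simp add: subspace_diff)
    have "norm (x n - c0)^2 = norm ((x n - Px n) + (Px n - c0))^2" by simp
    also have "\<dots> = norm (x n - Px n)^2 + norm (Px n - c0)^2 + 2 * ((x n - Px n) \<bullet> (Px n - c0))"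
      by (rule norm_add_sq)
    finally have "norm (x n - c0)^2 = norm (x n - Px n)^2 + norm (Px n - c0)^2 + 2 * ((x n - Px n) \<bullet> (Px n - c0))" .
    hence "norm (Px n - c0)^2 \<le> norm (x n - c0)^2" using o by simp
    thus ?thesis by (rule power2_le_imp_le) simp
  qed
  define B where "B = norm c0 + norm (x 0 - c0)"
  have PB: "norm (Px n) \<le> B" for n
  proof -
    have "norm (Px n) \<le> norm c0 + norm (Px n - c0)" using norm_triangle_ineq[of c0 "Px n - c0"] by simp
    also have "\<dots> \<le> B" unfolding B_def using pyth[of n] fej[OF c0, of n] by simp
    finally show ?thesis .
  qed
  have nconv: "convergent (\<lambda>n. norm (x n - c))" if "c \<in> C" for c
  proof (rule Bseq_monoseq_convergent)
    show "Bseq (\<lambda>n. norm (x n - c))" using fej[OF that] by (intro BseqI'[of _ "norm (x 0 - c)"]) simp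
    show "monoseq (\<lambda>n. norm (x n - c))"
      unfolding monoseq_iff using assms(7)[OF that] by (simp add: decseq_Suc_iff)
  qed
  have key: "convergent (\<lambda>n. Px n \<bullet> (c1 - c2))" if c12: "c1 \<in> C" "c2 \<in> C" for c1 c2
  proof -
    obtain a1 where a1: "(\<lambda>n. norm (x n - c1)) \<longlonglongrightarrow> a1" using nconv[OF c12(1)] convergent_def by blast
    obtain a2 where a2: "(\<lambda>n. norm (x n - c2)) \<longlonglongrightarrow> a2" using nconv[OF c12(2)] convergent_def by blast
    have "(\<lambda>n. (norm (x n - c2)^2 - norm (x n - c1)^2 - c2 \<bullet> c2 + c1 \<bullet> c1) / 2)
       \<longlonglongrightarrow> (a2^2 - a1^2 - c2 \<bullet> c2 + c1 \<bullet> c1) / 2"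
      by (intro tendsto_intros a1 a2) simp
    moreover have "(norm (x n - c2)^2 - norm (x n - c1)^2 - c2 \<bullet> c2 + c1 \<bullet> c1) / 2 = Px n \<bullet> (c1 - c2)" for n
    proof -
      have "c1 - c2 \<in> A" using c12 assms(6) assms(1) by (simp add: subset_iff subspace_diff)
      hence "(x n - Px n) \<bullet> (c1 - c2) = 0" by (rule orth)
      hence "Px n \<bullet> (c1 - c2) = x n \<bullet> (c1 - c2)" by (simp add: inner_diff_left)
      thus ?thesis using sq_ident[of "x n" c2 c1] by simp
    qed
    ultimately show ?thesis unfolding convergent_def by auto
  qed
  have inC: "p \<in> C" if "weak_cluster_point Px p" for p
    using assms(8)[of p] that unfolding Px_def .
  have uniq: "p = q" if wpq: "weak_cluster_point Px p" "weak_cluster_point Px q" for p q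
  proof -
    have pC: "p \<in> C" and qC: "q \<in> C" using inC wpq by auto
    obtain L where L: "(\<lambda>n. Px n \<bullet> (p - q)) \<longlonglongrightarrow> L" using key[OF pC qC] unfolding convergent_def by blast
    obtain r where r: "strict_mono r" "weakly_converges (Px \<circ> r) p"
      using wpq(1) unfolding weak_cluster_point_def by blast
    obtain s where s: "strict_mono s" "weakly_converges (Px \<circ> s) q"
      using wpq(2) unfolding weak_cluster_point_def by blast
    have "(\<lambda>n. (Px \<circ> r) n \<bullet> (p - q)) \<longlonglongrightarrow> p \<bullet> (p - q)"
      using r(2) unfolding weakly_converges_def by blast
    moreover have "(\<lambda>n. (Px \<circ> r) n \<bullet> (p - q)) \<longlonglongrightarrow> L"
      using LIMSEQ_subseq_LIMSEQ[OF L r(1)] by (simp add: o_def)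
    ultimately have 1: "p \<bullet> (p - q) = L" by (rule LIMSEQ_unique)
    have "(\<lambda>n. (Px \<circ> s) n \<bullet> (p - q)) \<longlonglongrightarrow> q \<bullet> (p - q)"
      using s(2) unfolding weakly_converges_def by blast
    moreover have "(\<lambda>n. (Px \<circ> s) n \<bullet> (p - q)) \<longlonglongrightarrow> L"
      using LIMSEQ_subseq_LIMSEQ[OF L s(1)] by (simp add: o_def)
    ultimately have 2: "q \<bullet> (p - q) = L" by (rule LIMSEQ_unique)
    have "(p - q) \<bullet> (p - q) = 0" using 1 2 by (simp add: inner_diff_left)
    thus ?thesis by simp
  qed
  obtain r p where r: "strict_mono r" "weakly_converges (Px \<circ> r) p"
    using weak_compact[of Px B, OF PB] by blast
  have wp: "weak_cluster_point Px p" unfolding weak_cluster_point_def using r by blast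
  have pC: "p \<in> C" using inC[OF wp] .
  have "weakly_converges Px p"
    unfolding weakly_converges_def
  proof (rule allI, rule ccontr)
    fix y assume nt: "\<not> (\<lambda>n. Px n \<bullet> y) \<longlonglongrightarrow> p \<bullet> y"
    then obtain e where e: "e > 0" "\<not> eventually (\<lambda>n. dist (Px n \<bullet> y) (p \<bullet> y) < e) sequentially"
      unfolding tendsto_iff by auto
    from not_eventually_sequentiallyD[OF e(2)]
    obtain s :: "nat \<Rightarrow> nat" where s0: "strict_mono s \<and> (\<forall>n. \<not> dist (Px (s n) \<bullet> y) (p \<bullet> y) < e)"
      by (elim exE)
    hence s: "strict_mono s" "\<And>n. \<not> dist (Px (s n) \<bullet> y) (p \<bullet> y) < e" by auto
    have PBs: "\<And>n. norm ((Px \<circ> s) n) \<le> B" using PB by simp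
    obtain t q where t: "strict_mono t" "weakly_converges ((Px \<circ> s) \<circ> t) q"
      using weak_compact[of "Px \<circ> s" B, OF PBs] by blast
    have "weak_cluster_point Px q" unfolding weak_cluster_point_def
      by (rule exI[of _ "s \<circ> t"], rule conjI, rule strict_mono_o[OF s(1) t(1)]) (use t(2) in \<open>simp add: o_assoc\<close>)
    hence "q = p" using uniq wp by blast
    hence "(\<lambda>n. ((Px \<circ> s) \<circ> t) n \<bullet> y) \<longlonglongrightarrow> p \<bullet> y" using t(2) weakly_converges_def by blast
    hence "eventually (\<lambda>n. dist (((Px \<circ> s) \<circ> t) n \<bullet> y) (p \<bullet> y) < e) sequentially"
      using e(1) unfolding tendsto_iff by blast
    then obtain N where "\<And>n. n \<ge> N \<Longrightarrow> dist (((Px \<circ> s) \<circ> t) n \<bullet> y) (p \<bullet> y) < e"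
      unfolding eventually_sequentially by blast
    hence "dist (Px (s (t N)) \<bullet> y) (p \<bullet> y) < e" by simp
    thus False using s(2) by blast
  qed
  thus ?thesis using pC unfolding Px_def by blast
qed

end
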